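(* Let $(B,\lfloor\cdot,\cdot\rfloor,\|\cdot\|)$ be an SSDB space with quadratic form $q$ and let $g_0(b)=\frac12\|b\|^2$. Then $\{x\in B: g_0(x)=q(x)\}+\{x\in B: g_0(x)=-q(x)\}=B.$
   Context: An SSD space is a pair $(B,\lfloor\cdot,\cdot\rfloor)$ with $B$ a nonzero real vector space and $\lfloor\cdot,\cdot\rfloor$ a symmetric bilinear form; $q(b)=\frac12\lfloor b,b\rfloor$. An SSDB space is a triple $(B,\lfloor\cdot,\cdot\rfloor,\|\cdot\|)$ such that $(B,\lfloor\cdot,\cdot\rfloor)$ is an SSD space, $(B,\|\cdot\|)$ is a Banach space, and the map $i:B\to B^*$, $i(b)=\lfloor\cdot,b\rfloor$, is a surjective isometry onto the dual $B^*$. *)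

theory Defs
  imports "HOL-Analysis.Analysis"
begin

definition SSD_space :: "('a::real_vector \<Rightarrow> 'a \<Rightarrow> real) \<Rightarrow> bool" where
  "SSD_space s \<longleftrightarrow> (\<exists>b::'a. b \<noteq> 0) \<and> bilinear s \<and> (\<forall>x y. s x y = s y x)"

text \<open>An SSDB space: the Banach space structure is the type class banach; the map
  i(b) = s(-,b) is a surjective isometry of B onto its dual B* (bounded linear
  functionals with the operator norm).\<close>
definition SSDB_space :: "('a::banach \<Rightarrow> 'a \<Rightarrow> real) \<Rightarrow> bool" where
  "SSDB_space s \<longleftrightarrow> SSD_space s
     \<and> (\<forall>b. bounded_linear (\<lambda>x. s x b) \<and> onorm (\<lambda>x. s x b) = norm b)
     \<and> (\<forall>f::'a \<Rightarrow> real. bounded_linear f \<longrightarrow> (\<exists>b. f = (\<lambda>x. s x b)))"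

definition quad_form :: "('a \<Rightarrow> 'a \<Rightarrow> real) \<Rightarrow> 'a \<Rightarrow> real" where
  "quad_form s b = s b b / 2"

definition g0 :: "'a::real_normed_vector \<Rightarrow> real" where
  "g0 b = (norm b)^2 / 2"

end

theory Submission
  imports Defs
begin
definition lingraph :: "('b::real_vector \<times> real) set \<Rightarrow> bool" where
  "lingraph G \<longleftrightarrow> (\<forall>x r y s c d. (x,r)\<in>G \<longrightarrow> (y,s)\<in>G \<longrightarrow> (c *\<^sub>R x + d *\<^sub>R y, c * r + d * s) \<in> G)
     \<and> (\<forall>x r r'. (x,r)\<in>G \<longrightarrow> (x,r')\<in>G \<longrightarrow> r = r')"

definition domg :: "('b \<Rightarrow> real) \<Rightarrow> ('b \<times> real) set \<Rightarrow> bool" where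
  "domg \<Phi> G \<longleftrightarrow> (\<forall>x r. (x,r)\<in>G \<longrightarrow> r \<le> \<Phi> x)"

lemma extend_step:
  fixes \<Phi> :: "'b::real_vector \<Rightarrow> real"
  assumes cvx: "\<And>x y t. 0 \<le> t \<Longrightarrow> t \<le> 1 \<Longrightarrow> \<Phi> (t  *\<^sub>R x + (1-t)  *\<^sub>R y) \<le> t * \<Phi> x + (1-t) * \<Phi> y"
    and lg: "lingraph G" and dg: "domg \<Phi> G" and ne: "G \<noteq> {}" and z: "z \<notin> fst ` G"
  shows "\<exists>G'. lingraph G' \<and> domg \<Phi> G' \<and> G \<subseteq> G' \<and> G' \<noteq> G"
proof -
  have comb: "\<And>x r y s c d. (x,r)\<in>G \<Longrightarrow> (y,s)\<in>G \<Longrightarrow> (c *\<^sub>R x + d *\<^sub>R y, c * r + d * s) \<in> G"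
    using lg unfolding lingraph_def by blast
  have fn: "\<And>x r r'. (x,r)\<in>G \<Longrightarrow> (x,r')\<in>G \<Longrightarrow> r = r'"
    using lg unfolding lingraph_def by blast
  have dom: "\<And>x r. (x,r)\<in>G \<Longrightarrow> r \<le> \<Phi> x" using dg unfolding domg_def by blast
  obtain x0 r0 where "(x0,r0) \<in> G" using ne by auto
  from comb[OF this this, of 0 0] have zero: "(0,0) \<in> G" by simp
  define L where "L = {(r' - \<Phi> (m' - s  *\<^sub>R z))/s | m' r' s. (m',r')\<in>G \<and> 0<s}"
  define U where "U = {(\<Phi> (m + t  *\<^sub>R z) - r)/t | m r t. (m,r)\<in>G \<and> 0<t}"
  have key: "l \<le> u" if lL: "l \<in> L" and uU: "u \<in> U" for l u
  proof -
    obtain m' r' s where l: "l = (r' - \<Phi> (m' - s  *\<^sub>R z))/s" "(m',r')\<in>G" "0<s"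
      using lL unfolding L_def by blast
    obtain m r t where u: "u = (\<Phi> (m + t  *\<^sub>R z) - r)/t" "(m,r)\<in>G" "0<t"
      using uU unfolding U_def by blast
    define a where "a = t/(s+t)"
    have a0: "0 \<le> a" "a \<le> 1" using l u by (auto simp: a_def)
    have pt: "a  *\<^sub>R (m' - s  *\<^sub>R z) + (1-a)  *\<^sub>R (m + t  *\<^sub>R z) = a  *\<^sub>R m' + (1-a)  *\<^sub>R m"
    proof -
      have "1 - a = s/(s+t)" using l u by (simp add: a_def field_simps)
      hence "-(a * s) + (1-a)*t = 0" using l u by (simp add: a_def field_simps)
      hence "(-(a * s) + (1-a)*t)  *\<^sub>R z = 0" by simp
      moreover have "a *\<^sub>R (m' - s *\<^sub>R z) + (1-a) *\<^sub>R (m + t *\<^sub>R z) = a *\<^sub>R m' + (1-a) *\<^sub>R m + (-(a * s) + (1-a)*t) *\<^sub>R z"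
        by (simp add: scaleR_right_diff_distrib scaleR_right_distrib scaleR_left_distrib scaleR_left_diff_distrib)
      ultimately show ?thesis by simp
    qed
    have "a * r' + (1-a) * r \<le> \<Phi> (a  *\<^sub>R m' + (1-a)  *\<^sub>R m)"
      using dom[OF comb[OF l(2) u(2)]] by simp
    also have "\<dots> \<le> a * \<Phi> (m' - s  *\<^sub>R z) + (1-a) * \<Phi> (m + t  *\<^sub>R z)"
      using cvx[OF a0, of "m' - s  *\<^sub>R z" "m + t  *\<^sub>R z"] pt by simp
    finally have ineq: "a * r' + (1-a) * r \<le> a * \<Phi> (m' - s  *\<^sub>R z) + (1-a) * \<Phi> (m + t  *\<^sub>R z)" .
    have st: "(s+t) * a = t" "(s+t) * (1-a) = s" using l(3) u(3) by (auto simp: a_def field_simps)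
    have "(s+t) * (a * r' + (1-a) * r) \<le> (s+t) * (a * \<Phi> (m' - s *\<^sub>R z) + (1-a) * \<Phi> (m + t *\<^sub>R z))"
      using ineq l(3) u(3) by (intro mult_left_mono) auto
    hence "t * r' + s * r \<le> t * \<Phi> (m' - s *\<^sub>R z) + s * \<Phi> (m + t *\<^sub>R z)"
      by (simp only: distrib_left mult.assoc[symmetric] st)
    hence "t * (r' - \<Phi> (m' - s *\<^sub>R z)) \<le> s * (\<Phi> (m + t *\<^sub>R z) - r)" by (simp add: algebra_simps)
    hence "(r' - \<Phi> (m' - s *\<^sub>R z)) / s \<le> (\<Phi> (m + t *\<^sub>R z) - r) / t"
      using l(3) u(3) by (simp add: divide_le_eq le_divide_eq mult.commute mult.left_commute)
    thus ?thesis using l(1) u(1) by simp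
  qed
  have "(0 - \<Phi> (0 - 1 *\<^sub>R z))/1 \<in> L" unfolding L_def
    by (rule CollectI, rule exI[where x=0], rule exI[where x=0], rule exI[where x=1]) (simp add: zero)
  hence Lne: "L \<noteq> {}" by blast
  have "(\<Phi> (0 + 1 *\<^sub>R z) - 0)/1 \<in> U" unfolding U_def
    by (rule CollectI, rule exI[where x=0], rule exI[where x=0], rule exI[where x=1]) (simp add: zero)
  hence Une: "U \<noteq> {}" by blast
  define c where "c = Sup L"
  have bddL: "bdd_above L" using Une key by (meson bdd_above_def ex_in_conv)
  have lc: "l \<le> c" if "l \<in> L" for l using cSup_upper[OF that bddL] c_def by simp
  have cu: "c \<le> u" if "u \<in> U" for u using cSup_least[OF Lne] key that c_def by blast
  define G' where "G' = {(m + t  *\<^sub>R z, r + t * c) | m r t. (m,r)\<in>G}"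
  have "lingraph G'"
    unfolding lingraph_def
  proof (intro conjI allI impI)
    fix x r y s' c1 d1 assume "(x,r)\<in>G'" "(y,s')\<in>G'"
    then obtain m1 r1 t1 m2 r2 t2 where A: "x = m1 + t1  *\<^sub>R z" "r = r1 + t1 * c" "(m1,r1)\<in>G"
       "y = m2 + t2  *\<^sub>R z" "s' = r2 + t2 * c" "(m2,r2)\<in>G" unfolding G'_def by blast
    have "c1  *\<^sub>R x + d1  *\<^sub>R y = (c1  *\<^sub>R m1 + d1  *\<^sub>R m2) + (c1 * t1 + d1 * t2)  *\<^sub>R z"
      using A by (simp add: algebra_simps scaleR_left_distrib)
    moreover have "c1 * r + d1 * s' = (c1 * r1 + d1 * r2) + (c1 * t1 + d1 * t2)*c" using A by (simp add: algebra_simps)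
    ultimately show "(c1  *\<^sub>R x + d1  *\<^sub>R y, c1 * r + d1 * s') \<in> G'"
      unfolding G'_def using comb[OF A(3) A(6)] by blast
  next
    fix x r r' assume "(x,r)\<in>G'" "(x,r')\<in>G'"
    then obtain m1 r1 t1 m2 r2 t2 where A: "x = m1 + t1  *\<^sub>R z" "r = r1 + t1 * c" "(m1,r1)\<in>G"
       "x = m2 + t2  *\<^sub>R z" "r' = r2 + t2 * c" "(m2,r2)\<in>G" unfolding G'_def by blast
    have "t1 = t2"
    proof (rule ccontr)
      assume ne: "t1 \<noteq> t2"
      have e: "m1 + t1 *\<^sub>R z = m2 + t2 *\<^sub>R z" using A(1) A(4) by simp
      have "m1 - m2 = t2 *\<^sub>R z - t1 *\<^sub>R z" using e by (metis add.commute add_diff_cancel_left add_diff_eq diff_add_eq_diff_diff_swap diff_diff_eq2 diff_self)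
      hence d: "m1 - m2 = (t2 - t1) *\<^sub>R z" by (simp add: scaleR_left_diff_distrib)
      have "(1/(t2-t1)) *\<^sub>R (m1 - m2) = z" unfolding d using ne by simp
      hence "z = (1/(t2-t1)) *\<^sub>R m1 + (-1/(t2-t1)) *\<^sub>R m2"
        by (simp add: scaleR_right_diff_distrib)
      hence "(z, (1/(t2-t1))*r1 + (-1/(t2-t1))*r2) \<in> G" using comb[OF A(3) A(6), of "1/(t2-t1)" "-1/(t2-t1)"] by simp
      thus False using z by (metis fst_conv image_eqI)
    qed
    hence "m1 = m2" using A by simp
    thus "r = r'" using A fn \<open>t1 = t2\<close> by auto
  qed
  moreover have "domg \<Phi> G'" unfolding domg_def
  proof (intro allI impI)
    fix x r assume "(x,r)\<in>G'"
    then obtain m r1 t where A: "x = m + t  *\<^sub>R z" "r = r1 + t * c" "(m,r1)\<in>G" unfolding G'_def by blast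
    consider "t = 0" | "t > 0" | "t < 0" by linarith
    then show "r \<le> \<Phi> x"
    proof cases
      case 1 then show ?thesis using A dom by simp
    next
      case 2
      have "(\<Phi> (m + t  *\<^sub>R z) - r1)/t \<in> U" unfolding U_def using A 2 by blast
      hence "c \<le> (\<Phi> (m + t  *\<^sub>R z) - r1)/t" by (rule cu)
      thus ?thesis using A 2 by (simp add: field_simps)
    next
      case 3
      have "(r1 - \<Phi> (m - (-t)  *\<^sub>R z))/(-t) \<in> L" unfolding L_def using A(3) 3 by (smt (verit, best) mem_Collect_eq)
      hence "(r1 - \<Phi> (m - (-t)  *\<^sub>R z))/(-t) \<le> c" by (rule lc)
      thus ?thesis using A 3 by (simp add: field_simps)
    qed
  qed
  moreover have "G \<subseteq> G'"
  proof
    fix p assume "p \<in> G"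
    moreover obtain m r where "p = (m,r)" by fastforce
    ultimately have "p = (m + 0 *\<^sub>R z, r + 0 * c) \<and> (m,r)\<in>G" by simp
    thus "p \<in> G'" unfolding G'_def by blast
  qed
  moreover have "G' \<noteq> G"
  proof -
    have "(z, c) = (0 + 1 *\<^sub>R z, 0 + 1 * c)" by simp
    hence "(z, c) \<in> G'" unfolding G'_def using zero by blast
    thus "G' \<noteq> G" using z by (metis fst_conv image_eqI)
  qed
  ultimately show ?thesis by blast
qed

lemma HB_graph:
  fixes \<Phi> :: "'b::real_vector \<Rightarrow> real"
  assumes cvx: "\<And>x y t. 0 \<le> t \<Longrightarrow> t \<le> 1 \<Longrightarrow> \<Phi> (t *\<^sub>R x + (1-t) *\<^sub>R y) \<le> t * \<Phi> x + (1-t) * \<Phi> y"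
    and lg: "lingraph G0" and dg: "domg \<Phi> G0" and ne: "G0 \<noteq> {}"
  shows "\<exists>L. linear L \<and> (\<forall>x. L x \<le> \<Phi> x) \<and> (\<forall>x r. (x,r) \<in> G0 \<longrightarrow> L x = r)"
proof -
  define A where "A = {G. G0 \<subseteq> G \<and> lingraph G \<and> domg \<Phi> G}"
  have "\<forall>C\<in>chains A. \<exists>U\<in>A. \<forall>X\<in>C. X \<subseteq> U"
  proof
    fix C assume C: "C \<in> chains A"
    hence CA: "C \<subseteq> A" and ch: "\<And>X Y. X \<in> C \<Longrightarrow> Y \<in> C \<Longrightarrow> X \<subseteq> Y \<or> Y \<subseteq> X"
      unfolding chains_def chain_subset_def by auto
    show "\<exists>U\<in>A. \<forall>X\<in>C. X \<subseteq> U"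
    proof (cases "C = {}")
      case True
      then show ?thesis using lg dg unfolding A_def by blast
    next
      case False
      have "\<Union>C \<in> A" unfolding A_def
      proof (intro CollectI conjI)
        show "G0 \<subseteq> \<Union>C" using False CA unfolding A_def by blast
        show "lingraph (\<Union>C)" unfolding lingraph_def
        proof (intro conjI allI impI)
          fix x r y s c d assume "(x,r) \<in> \<Union>C" "(y,s) \<in> \<Union>C"
          then obtain X Y where X: "X \<in> C" "(x,r) \<in> X" and Y: "Y \<in> C" "(y,s) \<in> Y" by blast
          from ch[OF X(1) Y(1)] obtain Z where Z: "Z \<in> C" "(x,r) \<in> Z" "(y,s) \<in> Z"
            using X Y by blast
          have "lingraph Z" using Z CA unfolding A_def by blast
          hence "(c *\<^sub>R x + d *\<^sub>R y, c * r + d * s) \<in> Z" using Z unfolding lingraph_def by blast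
          thus "(c *\<^sub>R x + d *\<^sub>R y, c * r + d * s) \<in> \<Union>C" using Z by blast
        next
          fix x r r' assume "(x,r) \<in> \<Union>C" "(x,r') \<in> \<Union>C"
          then obtain X Y where X: "X \<in> C" "(x,r) \<in> X" and Y: "Y \<in> C" "(x,r') \<in> Y" by blast
          from ch[OF X(1) Y(1)] obtain Z where Z: "Z \<in> C" "(x,r) \<in> Z" "(x,r') \<in> Z"
            using X Y by blast
          have "lingraph Z" using Z CA unfolding A_def by blast
          thus "r = r'" using Z unfolding lingraph_def by blast
        qed
        show "domg \<Phi> (\<Union>C)" using CA unfolding A_def domg_def by blast
      qed
      then show ?thesis by blast
    qed
  qed
  from Zorn_Lemma2[OF this] obtain M where M: "M \<in> A" and mx: "\<And>X. X \<in> A \<Longrightarrow> M \<subseteq> X \<Longrightarrow> X = M"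
    by blast
  have Mlg: "lingraph M" and Mdg: "domg \<Phi> M" and M0: "G0 \<subseteq> M" using M unfolding A_def by auto
  have Mne: "M \<noteq> {}" using M0 ne by blast
  have full: "x \<in> fst ` M" for x
  proof (rule ccontr)
    assume "x \<notin> fst ` M"
    from extend_step[OF cvx Mlg Mdg Mne this] obtain G' where
      "lingraph G'" "domg \<Phi> G'" "M \<subseteq> G'" "G' \<noteq> M" by blast
    moreover hence "G' \<in> A" using M0 unfolding A_def by blast
    ultimately show False using mx by blast
  qed
  have comb: "\<And>x r y s c d. (x,r)\<in>M \<Longrightarrow> (y,s)\<in>M \<Longrightarrow> (c *\<^sub>R x + d *\<^sub>R y, c * r + d * s) \<in> M"
    using Mlg unfolding lingraph_def by blast
  have fn: "\<And>x r r'. (x,r)\<in>M \<Longrightarrow> (x,r')\<in>M \<Longrightarrow> r = r'"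
    using Mlg unfolding lingraph_def by blast
  define L where "L x = (THE r. (x,r) \<in> M)" for x
  have Lin: "(x, L x) \<in> M" for x
  proof -
    obtain r where "(x,r) \<in> M" using full[of x] by force
    moreover hence "L x = r" unfolding L_def using fn by blast
    ultimately show ?thesis by simp
  qed
  have Leq: "(x,r) \<in> M \<Longrightarrow> L x = r" for x r using fn Lin by blast
  have "linear L"
  proof (rule linearI)
    fix x y
    have "(1 *\<^sub>R x + 1 *\<^sub>R y, 1 * L x + 1 * L y) \<in> M" by (rule comb[OF Lin Lin])
    thus "L (x + y) = L x + L y" using Leq by simp
  next
    fix c x
    have "(c *\<^sub>R x + 0 *\<^sub>R x, c * L x + 0 * L x) \<in> M" by (rule comb[OF Lin Lin])
    thus "L (c *\<^sub>R x) = c *\<^sub>R L x" using Leq by simp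
  qed
  moreover have "\<forall>x. L x \<le> \<Phi> x" using Mdg Lin unfolding domg_def by blast
  moreover have "\<forall>x r. (x,r) \<in> G0 \<longrightarrow> L x = r" using M0 Leq by blast
  ultimately show ?thesis by blast
qed

lemma ssdb_facts:
  assumes "SSDB_space s"
  shows "\<And>b. bounded_linear (\<lambda>x. s x b)" "\<And>b. onorm (\<lambda>x. s x b) = norm b"
    "\<And>x y. s x y = s y x"
    "\<And>f. bounded_linear f \<Longrightarrow> \<exists>b. f = (\<lambda>x. s x b)"
  using assms unfolding SSDB_space_def SSD_space_def by auto

lemma s_lin:
  assumes "SSDB_space s"
  shows "s (a + b) c = s a c + s b c" "s (a - b) c = s a c - s b c" "s (r *\<^sub>R a) c = r * s a c"
    "s c (a + b) = s c a + s c b" "s c (a - b) = s c a - s c b" "s c (r *\<^sub>R a) = r * s c a"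
    "s 0 c = 0" "s c 0 = 0" "s (-a) c = - s a c" "s c (-a) = - s c a"
proof -
  note sym = ssdb_facts(3)[OF assms]
  have lin: "linear (\<lambda>x. s x c)" for c using ssdb_facts(1)[OF assms] bounded_linear.linear by blast
  show 1: "s (a + b) c = s a c + s b c" using linear_add[OF lin] by blast
  show 2: "s (a - b) c = s a c - s b c" using linear_diff[OF lin] by blast
  show 3: "s (r *\<^sub>R a) c = r * s a c" using linear_scale[OF lin] by simp
  show "s c (a + b) = s c a + s c b" using 1 sym by metis
  show "s c (a - b) = s c a - s c b" using 2 sym by metis
  show "s c (r *\<^sub>R a) = r * s c a" using 3 sym by metis
  show 0: "s 0 c = 0" using linear_0[OF lin] by blast
  show "s c 0 = 0" using 0 sym by metis
  show m: "s (-a) c = - s a c" using linear_neg[OF lin] by blast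
  show "s c (-a) = - s c a" using m sym by metis
qed

lemma s_bound:
  assumes "SSDB_space s"
  shows "\<bar>s y b\<bar> \<le> norm b * norm y"
  using onorm[OF ssdb_facts(1)[OF assms], of y b] ssdb_facts(2)[OF assms] by simp

lemma s_diag: assumes "SSDB_space s" shows "\<bar>s y y\<bar> \<le> (norm y)^2"
  using s_bound[OF assms, of y y] by (simp add: power2_eq_square)

lemma supl:
  assumes S: "SSDB_space s" and H: "\<And>a. s a w - (norm a)^2/2 \<le> D"
  shows "(norm w)^2/2 \<le> D"
proof -
  have D0: "0 \<le> D" using H[of 0] s_lin(7)[OF S] by simp
  show ?thesis
  proof (cases "w = 0")
    case True then show ?thesis using D0 by simp
  next
    case False
    hence nw: "norm w > 0" by simp
    define M where "M = (D + (norm w)^2/2) / norm w"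
    have M0: "0 \<le> M" using D0 nw unfolding M_def by simp
    have one: "s y w \<le> M * norm y" for y
    proof (cases "y = 0")
      case True then show ?thesis using s_lin(7)[OF S] by simp
    next
      case False
      hence ny: "norm y > 0" by simp
      define a where "a = (norm w / norm y) *\<^sub>R y"
      have na: "norm a = norm w" unfolding a_def using ny by simp
      have sa: "s a w = (norm w / norm y) * s y w" unfolding a_def using s_lin(3)[OF S] by simp
      have "(norm w / norm y) * s y w \<le> D + (norm w)^2/2" using H[of a] na sa by simp
      hence "norm w * s y w \<le> (D + (norm w)^2/2) * norm y" using ny by (simp add: field_simps)
      thus ?thesis unfolding M_def using nw by (simp add: field_simps)
    qed
    have "norm (s y w) \<le> M * norm y" for y
      using one[of y] one[of "-y"] s_lin(9)[OF S, of y w] by simp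
    hence "onorm (\<lambda>y. s y w) \<le> M" by (rule onorm_bound[OF M0])
    hence "norm w \<le> M" using ssdb_facts(2)[OF S] by simp
    hence "norm w * norm w \<le> D + (norm w)^2/2" unfolding M_def using nw by (simp add: field_simps)
    thus ?thesis by (simp add: power2_eq_square)
  qed
qed

lemma normsq_cvx:
  fixes a b :: "'a::real_normed_vector"
  assumes "0 \<le> t" "t \<le> 1"
  shows "(norm (t *\<^sub>R a + (1-t) *\<^sub>R b))^2 \<le> t * (norm a)^2 + (1-t) * (norm b)^2"
proof -
  have "norm (t *\<^sub>R a + (1-t) *\<^sub>R b) \<le> t * norm a + (1-t) * norm b"
    using norm_triangle_ineq[of "t *\<^sub>R a" "(1-t) *\<^sub>R b"] assms by simp
  hence "(norm (t *\<^sub>R a + (1-t) *\<^sub>R b))^2 \<le> (t * norm a + (1-t) * norm b)^2"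
    by (rule power_mono) simp
  also have "\<dots> \<le> t * (norm a)^2 + (1-t) * (norm b)^2"
  proof -
    have "t * (norm a)^2 + (1-t) * (norm b)^2 - (t * norm a + (1-t) * norm b)^2 = t*(1-t)*(norm a - norm b)^2"
      by (simp add: power2_eq_square algebra_simps)
    moreover have "0 \<le> t*(1-t)*(norm a - norm b)^2" using assms by simp
    ultimately show ?thesis by linarith
  qed
  finally show ?thesis .
qed

lemma decomp:
  fixes s :: "'a::banach \<Rightarrow> 'a \<Rightarrow> real"
  assumes S: "SSDB_space s"
  shows "\<exists>b. (norm b)^2 = s b b \<and> (norm (x - b))^2 = - s (x - b) (x - b)"
proof -
  note sl = s_lin[OF S]
  define \<Phi> where "\<Phi> p = (norm (fst p))^2/2 + (norm (x - snd p))^2/2 - s x (snd p) + s x x/2" for p :: "'a \<times> 'a"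
  have cvx: "\<Phi> (t *\<^sub>R p + (1-t) *\<^sub>R q) \<le> t * \<Phi> p + (1-t) * \<Phi> q" if t: "0 \<le> t" "t \<le> 1" for p q t
  proof -
    have e1: "x - snd (t *\<^sub>R p + (1-t) *\<^sub>R q) = t *\<^sub>R (x - snd p) + (1-t) *\<^sub>R (x - snd q)"
      by (simp add: algebra_simps)
    have e2: "s x (snd (t *\<^sub>R p + (1-t) *\<^sub>R q)) = t * s x (snd p) + (1-t) * s x (snd q)"
      by (simp add: sl)
    have n1: "(norm (fst (t *\<^sub>R p + (1-t) *\<^sub>R q)))^2 \<le> t * (norm (fst p))^2 + (1-t) * (norm (fst q))^2"
      using normsq_cvx[OF t, of "fst p" "fst q"] by simp
    have n2: "(norm (x - snd (t *\<^sub>R p + (1-t) *\<^sub>R q)))^2 \<le> t * (norm (x - snd p))^2 + (1-t) * (norm (x - snd q))^2"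
      using normsq_cvx[OF t, of "x - snd p" "x - snd q"] e1 by simp
    have lhs: "\<Phi> (t *\<^sub>R p + (1-t) *\<^sub>R q) = (norm (fst (t *\<^sub>R p + (1-t) *\<^sub>R q)))^2/2
       + (norm (x - snd (t *\<^sub>R p + (1-t) *\<^sub>R q)))^2/2 - (t * s x (snd p) + (1-t) * s x (snd q)) + s x x/2"
      by (simp only: \<Phi>_def e2)
    have rhs: "t * \<Phi> p + (1-t) * \<Phi> q = t*(norm(fst p))^2/2 + (1-t)*(norm (fst q))^2/2 + t*(norm(x-snd p))^2/2
       + (1-t)*(norm(x - snd q))^2/2 - (t * s x (snd p) + (1-t)* s x (snd q)) + s x x/2"
      unfolding \<Phi>_def by (simp add: field_simps)
    show ?thesis unfolding lhs rhs using n1 n2 by linarith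
  qed
  define G0 :: "(('a \<times> 'a) \<times> real) set" where "G0 = {((a,a),0) | a. True}"
  have "lingraph G0" unfolding lingraph_def
  proof (intro conjI allI impI)
    fix y r z r' c d assume "(y,r) \<in> G0" "(z,r') \<in> G0"
    then obtain a b where ab: "y=(a,a)" "r=0" "z=(b,b)" "r'=0" unfolding G0_def by blast
    have "(c *\<^sub>R y + d *\<^sub>R z, c * r + d * r') = ((c *\<^sub>R a + d *\<^sub>R b, c *\<^sub>R a + d *\<^sub>R b), 0)"
      using ab by simp
    thus "(c *\<^sub>R y + d *\<^sub>R z, c * r + d * r') \<in> G0" unfolding G0_def by blast
  next
    fix y r r' assume "(y,r) \<in> G0" "(y,r') \<in> G0"
    thus "r = r'" unfolding G0_def by blast
  qed
  moreover have "domg \<Phi> G0" unfolding domg_def G0_def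
  proof (intro allI impI)
    fix p r assume "(p, r) \<in> {((a::'a,a),0::real) | a. True}"
    then obtain a where p: "p = (a,a)" "r = 0" by blast
    have h1: "s a a \<le> (norm a)^2" using s_diag[OF S, of a] by simp
    have h2: "- s (x - a) (x - a) \<le> (norm (x - a))^2" using s_diag[OF S, of "x - a"] by simp
    have "s (x - a) (x - a) = s x x - 2 * s x a + s a a"
      using ssdb_facts(3)[OF S, of a x] by (simp add: sl)
    thus "r \<le> \<Phi> p" unfolding p \<Phi>_def using h1 h2 by simp
  qed
  moreover have "G0 \<noteq> {}" unfolding G0_def by blast
  ultimately obtain L where L0: "linear L" "\<forall>p. L p \<le> \<Phi> p" "\<forall>p r. (p,r) \<in> G0 \<longrightarrow> L p = r"
    using HB_graph[of \<Phi> G0, OF cvx] by blast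
  have L: "linear L" "\<And>p. L p \<le> \<Phi> p" "\<And>a. L (a,a) = 0"
    using L0 unfolding G0_def by auto
  define l where "l v = L (v, 0)" for v
  have Lsplit: "L (a,u) = l a - l u" for a u
  proof -
    have "(a,u) = (a,0) + (u,u) - (u,0)" by simp
    hence "L (a,u) = L (a,0) + L (u,u) - L (u,0)"
      using linear_add[OF L(1)] linear_diff[OF L(1)] by metis
    thus ?thesis unfolding l_def using L(3) by simp
  qed
  have ll: "linear l"
  proof (rule linearI)
    fix u v :: 'a
    have "(u + v, 0::'a) = (u,0) + (v,0)" by simp
    thus "l (u + v) = l u + l v" unfolding l_def using linear_add[OF L(1)] by metis
  next
    fix r :: real and u :: 'a
    have "(r *\<^sub>R u, 0::'a) = r *\<^sub>R (u,0)" by simp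
    thus "l (r *\<^sub>R u) = r *\<^sub>R l u" unfolding l_def using linear_scale[OF L(1)] by metis
  qed
  define C where "C = (norm x)^2/2 + s x x/2"
  have C0: "0 \<le> C" unfolding C_def using s_diag[OF S, of x] by simp
  have lb: "l v \<le> (norm v)^2/2 + C" for v
    using L(2)[of "(v,0)"] unfolding l_def \<Phi>_def C_def by (simp add: sl)
  have lb2: "l v \<le> (1/2 + C) * norm v" for v
  proof (cases "v = 0")
    case True then show ?thesis using linear_0[OF ll] by simp
  next
    case False
    hence nv: "norm v > 0" by simp
    have "l ((1/norm v) *\<^sub>R v) \<le> 1/2 + C" using lb[of "(1/norm v) *\<^sub>R v"] nv by simp
    hence "(1/norm v) * l v \<le> 1/2 + C" using linear_scale[OF ll] by simp
    thus ?thesis using nv by (simp add: field_simps)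
  qed
  have "bounded_linear l"
  proof (rule bounded_linear_intro[where K = "1/2 + C"])
    show "l (x + y) = l x + l y" for x y by (rule linear_add[OF ll])
    show "l (r *\<^sub>R x) = r *\<^sub>R l x" for r x by (rule linear_scale[OF ll])
    show "norm (l v) \<le> norm v * (1/2 + C)" for v
      using lb2[of v] lb2[of "-v"] linear_neg[OF ll, of v] by (simp add: abs_le_iff mult.commute)
  qed
  then obtain b where b: "l = (\<lambda>y. s y b)" using ssdb_facts(4)[OF S] by blast
  have main: "(s a b - (norm a)^2/2) + (s v (b - x) - (norm v)^2/2) \<le> s x b - s x x/2" for a v
  proof -
    have "L (a, x - v) \<le> \<Phi> (a, x - v)" by (rule L(2))
    hence "s a b - s (x - v) b \<le> (norm a)^2/2 + (norm v)^2/2 - s x (x - v) + s x x/2"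
      unfolding Lsplit b \<Phi>_def by simp
    moreover have "s v (b - x) = s v b - s x v" using ssdb_facts(3)[OF S, of v x] by (simp add: sl)
    moreover have "s x b = s b x" "s x v = s v x" using ssdb_facts(3)[OF S] by auto
    ultimately show ?thesis by (simp add: sl)
  qed
  have "(norm b)^2/2 + (norm (b - x))^2/2 \<le> s x b - s x x/2"
  proof -
    have "(s v (b - x) - (norm v)^2/2) \<le> s x b - s x x/2 - (norm b)^2/2" for v
    proof -
      have "s a b - (norm a)^2/2 \<le> s x b - s x x/2 - (s v (b - x) - (norm v)^2/2)" for a
        using main[of a v] by linarith
      from supl[OF S this] show ?thesis by linarith
    qed
    hence "(norm (b - x))^2/2 \<le> s x b - s x x/2 - (norm b)^2/2" by (rule supl[OF S])
    thus ?thesis by simp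
  qed
  hence ineq: "(norm b)^2 + (norm (x - b))^2 \<le> 2 * s x b - s x x" by (simp add: norm_minus_commute)
  have h1: "s b b \<le> (norm b)^2" using s_diag[OF S, of b] by simp
  have h2: "- s (x - b) (x - b) \<le> (norm (x - b))^2" using s_diag[OF S, of "x - b"] by simp
  have "s (x - b) (x - b) = s x x - 2 * s x b + s b b"
    using ssdb_facts(3)[OF S, of b x] by (simp add: sl)
  hence "(norm b)^2 = s b b \<and> (norm (x - b))^2 = - s (x - b) (x - b)" using ineq h1 h2 by linarith
  thus ?thesis by blast
qed

theorem mainTheorem15:
  fixes s :: "'a::banach \<Rightarrow> 'a \<Rightarrow> real"
  assumes "SSDB_space s"
  shows "{a + c | a c. a \<in> {x. g0 x = quad_form s x} \<and> c \<in> {x. g0 x = - quad_form s x}} = UNIV"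
proof (intro set_eqI iffI)
  fix x :: 'a
  obtain b where b: "(norm b)^2 = s b b" "(norm (x - b))^2 = - s (x - b) (x - b)"
    using decomp[OF assms] by blast
  have "x = b + (x - b)" by simp
  moreover have "g0 b = quad_form s b" "g0 (x - b) = - quad_form s (x - b)"
    unfolding g0_def quad_form_def using b by simp_all
  ultimately show "x \<in> {a + c | a c. a \<in> {x. g0 x = quad_form s x} \<and> c \<in> {x. g0 x = - quad_form s x}}"
    by blast
qed simp

end
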